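(* Let $\mathcal{U}$ be a UEC-representative. Then the set of maximal DAGs in the UEC of $\mathcal{U}$ is exactly one Markov equivalence class of DAGs.
   Context: For a DAG $\mathcal{D}$, a trek is a path with no repeated vertices and no collider; the unconditional dependence graph $\mathcal{U}^\mathcal{D}$ has an edge between distinct $v,w$ iff there is a trek between them. A UEC-representative is an undirected graph $\mathcal{U}$ with $\mathcal{U}=\mathcal{U}^\mathcal{D}$ for some DAG on the same vertex set; its UEC is $\{\mathcal{D}:\mathcal{U}^\mathcal{D}=\mathcal{U}\}$. A DAG in the UEC is maximal if every DAG obtained by adding one edge to it is not in the UEC. Two DAGs are Markov equivalent if they have the same d-separation statements, equivalently the same skeleton and the same v-structures. *)

theory Defs
  imports Main
begin

definition dag :: "'a set \<Rightarrow> ('a \<times> 'a) set \<Rightarrow> bool" where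
  "dag V E \<longleftrightarrow> E \<subseteq> V \<times> V \<and> acyclic E"

definition adj :: "('a \<times> 'a) set \<Rightarrow> 'a \<Rightarrow> 'a \<Rightarrow> bool" where
  "adj E x y \<longleftrightarrow> (x, y) \<in> E \<or> (y, x) \<in> E"

definition is_path :: "('a \<times> 'a) set \<Rightarrow> 'a list \<Rightarrow> bool" where
  "is_path E xs \<longleftrightarrow> xs \<noteq> [] \<and> distinct xs \<and>
     (\<forall>i. Suc i < length xs \<longrightarrow> adj E (xs ! i) (xs ! Suc i))"

definition collider_free :: "('a \<times> 'a) set \<Rightarrow> 'a list \<Rightarrow> bool" where
  "collider_free E xs \<longleftrightarrow>
     (\<forall>i. 0 < i \<and> Suc i < length xs \<longrightarrow>
        \<not> ((xs ! (i - 1), xs ! i) \<in> E \<and> (xs ! Suc i, xs ! i) \<in> E))"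

definition is_trek :: "('a \<times> 'a) set \<Rightarrow> 'a \<Rightarrow> 'a \<Rightarrow> bool" where
  "is_trek E v w \<longleftrightarrow>
     (\<exists>xs. is_path E xs \<and> collider_free E xs \<and> hd xs = v \<and> last xs = w)"

text \<open>Unconditional dependence graph, as a symmetric irreflexive edge relation on V.\<close>
definition udg :: "'a set \<Rightarrow> ('a \<times> 'a) set \<Rightarrow> ('a \<times> 'a) set" where
  "udg V E = {(v, w). v \<in> V \<and> w \<in> V \<and> v \<noteq> w \<and> is_trek E v w}"

definition uec_representative :: "'a set \<Rightarrow> ('a \<times> 'a) set \<Rightarrow> bool" where
  "uec_representative V U \<longleftrightarrow> (\<exists>E. dag V E \<and> udg V E = U)"

definition uec :: "'a set \<Rightarrow> ('a \<times> 'a) set \<Rightarrow> ('a \<times> 'a) set set" where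
  "uec V U = {E. dag V E \<and> udg V E = U}"

definition maximal_in_uec :: "'a set \<Rightarrow> ('a \<times> 'a) set \<Rightarrow> ('a \<times> 'a) set \<Rightarrow> bool" where
  "maximal_in_uec V U E \<longleftrightarrow> E \<in> uec V U \<and>
     (\<forall>x y. (x, y) \<notin> E \<and> dag V (insert (x, y) E) \<longrightarrow> insert (x, y) E \<notin> uec V U)"

definition skeleton :: "('a \<times> 'a) set \<Rightarrow> ('a \<times> 'a) set" where
  "skeleton E = {(x, y). adj E x y}"

definition v_structures :: "('a \<times> 'a) set \<Rightarrow> ('a \<times> 'a \<times> 'a) set" where
  "v_structures E = {(a, b, c). (a, b) \<in> E \<and> (c, b) \<in> E \<and> a \<noteq> c \<and> \<not> adj E a c}"

definition markov_equivalent :: "('a \<times> 'a) set \<Rightarrow> ('a \<times> 'a) set \<Rightarrow> bool" where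
  "markov_equivalent E F \<longleftrightarrow> skeleton E = skeleton F \<and> v_structures E = v_structures F"

end

theory Submission
  imports Defs
begin


definition CA :: "('a \<times> 'a) set \<Rightarrow> 'a \<Rightarrow> 'a \<Rightarrow> bool" where
  "CA E v w \<longleftrightarrow> (\<exists>c. (c, v) \<in> E\<^sup>* \<and> (c, w) \<in> E\<^sup>*)"

definition adjl :: "('a \<times> 'a) set \<Rightarrow> 'a list \<Rightarrow> bool" where
  "adjl E xs \<longleftrightarrow> (\<forall>i. Suc i < length xs \<longrightarrow> adj E (xs ! i) (xs ! Suc i))"

lemma adjl_tl: "adjl E (x # xs) \<Longrightarrow> adjl E xs"
  unfolding adjl_def
proof (intro allI impI)
  fix i assume "\<forall>i. Suc i < length (x # xs) \<longrightarrow> adj E ((x # xs) ! i) ((x # xs) ! Suc i)"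
    "Suc i < length xs"
  then show "adj E (xs ! i) (xs ! Suc i)" by (auto dest: spec[where x="Suc i"])
qed

lemma cf_tl: "collider_free E (x # xs) \<Longrightarrow> collider_free E xs"
  unfolding collider_free_def
proof (intro allI impI)
  fix i assume a: "\<forall>i. 0 < i \<and> Suc i < length (x # xs) \<longrightarrow>
        \<not> (((x # xs) ! (i - 1), (x # xs) ! i) \<in> E \<and> ((x # xs) ! Suc i, (x # xs) ! i) \<in> E)"
    and i: "0 < i \<and> Suc i < length xs"
  from a[rule_format, of "Suc i"] i
  show "\<not> ((xs ! (i - 1), xs ! i) \<in> E \<and> (xs ! Suc i, xs ! i) \<in> E)"
    by (cases i) auto
qed

lemma dir_fwd:
  "adjl E (x # y # zs) \<Longrightarrow> collider_free E (x # y # zs) \<Longrightarrow> (x, y) \<in> E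
   \<Longrightarrow> (x, last (y # zs)) \<in> E\<^sup>*"
proof (induction zs arbitrary: x y)
  case Nil
  then show ?case by auto
next
  case (Cons z zs)
  have "adj E y z" using Cons.prems(1) unfolding adjl_def by (auto dest: spec[where x="Suc 0"])
  moreover have "\<not> ((x, y) \<in> E \<and> (z, y) \<in> E)"
    using Cons.prems(2) unfolding collider_free_def by (auto dest: spec[where x="Suc 0"])
  ultimately have "(y, z) \<in> E" using Cons.prems(3) unfolding adj_def by auto
  then have "(y, last (z # zs)) \<in> E\<^sup>*"
    using Cons.IH[of y z] adjl_tl[OF Cons.prems(1)] cf_tl[OF Cons.prems(2)] by auto
  then show ?case using Cons.prems(3) by auto
qed

lemma path_CA:
  "xs \<noteq> [] \<Longrightarrow> adjl E xs \<Longrightarrow> collider_free E xs \<Longrightarrow> CA E (hd xs) (last xs)"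
proof (induction xs)
  case Nil
  then show ?case by simp
next
  case (Cons x ys)
  show ?case
  proof (cases ys)
    case Nil
    then show ?thesis unfolding CA_def by auto
  next
    case (Cons y zs)
    have "adj E x y" using Cons.prems(2) \<open>ys = y # zs\<close> unfolding adjl_def by fastforce
    show ?thesis
    proof (cases "(x, y) \<in> E")
      case True
      then have "(x, last ys) \<in> E\<^sup>*" using dir_fwd Cons.prems \<open>ys = y # zs\<close> by metis
      then show ?thesis unfolding CA_def using \<open>ys = y # zs\<close> by auto
    next
      case False
      then have "(y, x) \<in> E" using \<open>adj E x y\<close> unfolding adj_def by auto
      from Cons.IH \<open>ys = y # zs\<close> adjl_tl[OF Cons.prems(2)] cf_tl[OF Cons.prems(3)]
      obtain c where "(c, y) \<in> E\<^sup>*" "(c, last ys) \<in> E\<^sup>*" unfolding CA_def by auto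
      then show ?thesis unfolding CA_def using \<open>(y, x) \<in> E\<close> \<open>ys = y # zs\<close>
        by (auto intro: rtrancl_into_rtrancl)
    qed
  qed
qed

lemma trek_CA: "is_trek E v w \<Longrightarrow> CA E v w"
  unfolding is_trek_def is_path_def using path_CA unfolding adjl_def by metis

lemma trek_refl: "is_trek E v v"
  unfolding is_trek_def is_path_def collider_free_def by (rule exI[of _ "[v]"]) auto

lemma trek_sym: assumes "is_trek E v w" shows "is_trek E w v"
proof -
  obtain xs where xs: "is_path E xs" "collider_free E xs" "hd xs = v" "last xs = w"
    using assms unfolding is_trek_def by auto
  let ?n = "length xs"
  have "is_path E (rev xs)" unfolding is_path_def
  proof (intro conjI allI impI)
    show "rev xs \<noteq> []" "distinct (rev xs)" using xs(1) unfolding is_path_def by auto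
    fix i assume i: "Suc i < length (rev xs)"
    define k where "k = ?n - Suc (Suc i)"
    have all: "\<forall>k. Suc k < ?n \<longrightarrow> adj E (xs ! k) (xs ! Suc k)"
      using xs(1) unfolding is_path_def by blast
    have k1: "Suc k < ?n" using i unfolding k_def by simp
    have e1: "rev xs ! i = xs ! Suc k" using i unfolding k_def by (simp add: rev_nth Suc_diff_Suc)
    have e2: "rev xs ! Suc i = xs ! k" using i unfolding k_def by (simp add: rev_nth)
    show "adj E (rev xs ! i) (rev xs ! Suc i)"
      using all k1 unfolding e1 e2 adj_def by blast
  qed
  moreover have "collider_free E (rev xs)" unfolding collider_free_def
  proof (intro allI impI)
    fix i assume i: "0 < i \<and> Suc i < length (rev xs)"
    define j where "j = ?n - Suc i"
    have j: "0 < j" "Suc j < ?n" using i unfolding j_def by auto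
    have all: "\<forall>j. 0 < j \<and> Suc j < ?n \<longrightarrow> \<not> ((xs ! (j - 1), xs ! j) \<in> E \<and> (xs ! Suc j, xs ! j) \<in> E)"
      using xs(2) unfolding collider_free_def by blast
    have e1: "rev xs ! i = xs ! j" using i unfolding j_def by (simp add: rev_nth)
    have e2: "rev xs ! Suc i = xs ! (j - 1)" using i unfolding j_def by (simp add: rev_nth)
    have e3: "rev xs ! (i - 1) = xs ! Suc j" using i unfolding j_def by (cases i) (auto simp: rev_nth Suc_diff_Suc)
    show "\<not> ((rev xs ! (i - 1), rev xs ! i) \<in> E \<and> (rev xs ! Suc i, rev xs ! i) \<in> E)"
      using all j unfolding e1 e2 e3 by blast
  qed
  moreover have "hd (rev xs) = w" "last (rev xs) = v" using xs(1,3,4) unfolding is_path_def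
    by (auto simp: hd_rev last_rev)
  ultimately show ?thesis unfolding is_trek_def by blast
qed

lemma path_drop: assumes "is_path E xs" "k < length xs" shows "is_path E (drop k xs)"
  using assms unfolding is_path_def by auto

lemma cf_drop: assumes "collider_free E xs" "k < length xs" shows "collider_free E (drop k xs)"
  unfolding collider_free_def
proof (intro allI impI)
  fix i assume i: "0 < i \<and> Suc i < length (drop k xs)"
  then have "0 < k + i \<and> Suc (k + i) < length xs" by auto
  then have "\<not> ((xs ! (k + i - 1), xs ! (k + i)) \<in> E \<and> (xs ! Suc (k + i), xs ! (k + i)) \<in> E)"
    using assms(1) unfolding collider_free_def by blast
  moreover have "k + i - 1 = k + (i - 1)" using i by auto
  ultimately show "\<not> ((drop k xs ! (i - 1), drop k xs ! i) \<in> E \<and> (drop k xs ! Suc i, drop k xs ! i) \<in> E)"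
    using i by auto
qed

lemma trek_front:
  assumes "is_trek E u w" "(u, v) \<in> E" "acyclic E"
  shows "is_trek E v w"
proof -
  obtain xs where xs: "is_path E xs" "collider_free E xs" "hd xs = u" "last xs = w"
    using assms unfolding is_trek_def by auto
  have ne: "xs \<noteq> []" using xs(1) unfolding is_path_def by auto
  show ?thesis
  proof (cases "v \<in> set xs")
    case True
    then obtain k where k: "k < length xs" "xs ! k = v" by (auto simp: in_set_conv_nth)
    have "hd (drop k xs) = v" using k by (simp add: hd_drop_conv_nth)
    moreover have "last (drop k xs) = w" using k xs(4) by simp
    ultimately show ?thesis unfolding is_trek_def using path_drop[OF xs(1) k(1)] cf_drop[OF xs(2) k(1)]
      by blast
  next
    case False
    have x0: "xs ! 0 = u" using xs(3) ne by (simp add: hd_conv_nth)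
    have "is_path E (v # xs)" unfolding is_path_def
    proof (intro conjI allI impI)
      show "v # xs \<noteq> []" by simp
      show "distinct (v # xs)" using False xs(1) unfolding is_path_def by auto
      fix i assume i: "Suc i < length (v # xs)"
      show "adj E ((v # xs) ! i) ((v # xs) ! Suc i)"
      proof (cases i)
        case 0 then show ?thesis using x0 assms(2) by (simp add: adj_def)
      next
        case (Suc j) then show ?thesis using xs(1) i unfolding is_path_def by auto
      qed
    qed
    moreover have "collider_free E (v # xs)" unfolding collider_free_def
    proof (intro allI impI)
      fix i assume i: "0 < i \<and> Suc i < length (v # xs)"
      show "\<not> (((v # xs) ! (i - 1), (v # xs) ! i) \<in> E \<and> ((v # xs) ! Suc i, (v # xs) ! i) \<in> E)"
      proof (cases i)
        case 0 then show ?thesis using i by simp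
      next
        case (Suc j)
        show ?thesis
        proof (cases j)
          case 0
          have "(v, u) \<notin> E"
          proof
            assume "(v, u) \<in> E"
            with assms(2) have "(u, u) \<in> E\<^sup>+" by auto
            with assms(3) show False unfolding acyclic_def by auto
          qed
          then show ?thesis using Suc 0 x0 by simp
        next
          case (Suc l)
          have "0 < j \<and> Suc j < length xs" using i \<open>i = Suc j\<close> Suc by auto
          then show ?thesis using xs(2) \<open>i = Suc j\<close> Suc unfolding collider_free_def by auto
        qed
      qed
    qed
    moreover have "hd (v # xs) = v" "last (v # xs) = w" using ne xs(4) by auto
    ultimately show ?thesis unfolding is_trek_def by blast
  qed
qed

lemma anc_trek: "(c, v) \<in> E\<^sup>* \<Longrightarrow> acyclic E \<Longrightarrow> is_trek E v c"
proof (induction rule: rtrancl_induct)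
  case base then show ?case by (simp add: trek_refl)
next
  case (step y z) then show ?case using trek_front[of E y c z] by blast
qed

lemma CA_trek: assumes "acyclic E" "CA E v w" shows "is_trek E v w"
proof -
  obtain c where c: "(c, v) \<in> E\<^sup>*" "(c, w) \<in> E\<^sup>*" using assms(2) unfolding CA_def by auto
  have "is_trek E c v" using trek_sym[OF anc_trek[OF c(1) assms(1)]] .
  have "is_trek E w v" using c(2)
  proof (induction rule: rtrancl_induct)
    case base then show ?case by fact
  next
    case (step y z) then show ?case using trek_front[of E y v z] assms(1) by blast
  qed
  then show ?thesis by (rule trek_sym)
qed

lemma udg_eq: "acyclic E \<Longrightarrow> udg V E = {(v, w). v \<in> V \<and> w \<in> V \<and> v \<noteq> w \<and> CA E v w}"
proof -
  assume a: "acyclic E"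
  have e: "is_trek E v w = CA E v w" for v w using trek_CA[of E v w] CA_trek[OF a, of v w] by (rule iffI)
  show ?thesis unfolding udg_def e ..
qed



definition cu :: "('a \<times> 'a) set \<Rightarrow> 'a \<Rightarrow> 'a \<Rightarrow> bool" where
  "cu U x b \<longleftrightarrow> x = b \<or> (x, b) \<in> U"

definition lee :: "'a set \<Rightarrow> ('a \<times> 'a) set \<Rightarrow> 'a \<Rightarrow> 'a \<Rightarrow> bool" where
  "lee V U x y \<longleftrightarrow> x \<in> V \<and> y \<in> V \<and> (\<forall>b\<in>V. cu U x b \<longrightarrow> cu U y b)"

definition QQ :: "'a set \<Rightarrow> ('a \<times> 'a) set \<Rightarrow> ('a \<times> 'a) set \<Rightarrow> bool" where
  "QQ V U D \<longleftrightarrow> (\<forall>x\<in>V. \<forall>y\<in>V. x \<noteq> y \<longrightarrow> lee V U x y \<longrightarrow> (x, y) \<in> D \<or> (y, x) \<in> D\<^sup>*)"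

lemma uec_CA:
  assumes "D \<in> uec V U" "x \<in> V" "b \<in> V"
  shows "cu U x b = CA D x b"
proof -
  have d: "dag V D" "udg V D = U" using assms(1) unfolding uec_def by auto
  then have U: "U = {(v, w). v \<in> V \<and> w \<in> V \<and> v \<noteq> w \<and> CA D v w}"
    using udg_eq[of D V] unfolding dag_def by auto
  have "CA D x x" unfolding CA_def by auto
  then show ?thesis unfolding cu_def U using assms(2,3) by auto
qed

lemma rt_V: "E \<subseteq> V \<times> V \<Longrightarrow> (c, x) \<in> E\<^sup>* \<Longrightarrow> x \<in> V \<Longrightarrow> c \<in> V"
  by (erule converse_rtranclE) auto

lemma lee_refl: "x \<in> V \<Longrightarrow> lee V U x x"
  unfolding lee_def by auto

lemma lee_trans: "lee V U x y \<Longrightarrow> lee V U y z \<Longrightarrow> lee V U x z"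
  unfolding lee_def by blast

lemma cu_sym:
  assumes "D \<in> uec V U" "x \<in> V" "b \<in> V" "cu U x b" shows "cu U b x"
proof -
  have "CA D x b" using uec_CA assms by metis
  then have "CA D b x" unfolding CA_def by auto
  then show ?thesis using uec_CA assms by metis
qed

lemma P1:
  assumes "D \<in> uec V U" "(x, y) \<in> D\<^sup>*" "x \<in> V" "y \<in> V"
  shows "lee V U x y"
  unfolding lee_def
proof (intro conjI ballI impI)
  fix b assume b: "b \<in> V" "cu U x b"
  then have "CA D x b" using uec_CA[OF assms(1) assms(3) b(1)] by simp
  then obtain c where "(c, x) \<in> D\<^sup>*" "(c, b) \<in> D\<^sup>*" unfolding CA_def by auto
  then have "CA D y b" unfolding CA_def using assms(2) by (meson rtrancl_trans)
  then show "cu U y b" using uec_CA[OF assms(1) assms(4) b(1)] by simp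
qed (use assms in auto)

lemma P2:
  assumes D: "D \<in> uec V U" and xy: "x \<in> V" "y \<in> V" and ac: "acyclic (insert (x, y) D)"
    and le: "lee V U x y"
  shows "insert (x, y) D \<in> uec V U"
proof -
  let ?D = "insert (x, y) D"
  have d: "dag V D" "udg V D = U" using D unfolding uec_def by auto
  have sub: "D \<subseteq> V \<times> V" using d(1) unfolding dag_def by auto
  have dag': "dag V ?D" unfolding dag_def using sub xy ac by auto
  have eq: "CA ?D v w = CA D v w" if vw: "v \<in> V" "w \<in> V" for v w
  proof
    assume "CA D v w"
    then show "CA ?D v w" unfolding CA_def using rtrancl_mono[of D ?D] by blast
  next
    assume "CA ?D v w"
    then obtain c where c: "(c, v) \<in> ?D\<^sup>*" "(c, w) \<in> ?D\<^sup>*" unfolding CA_def by auto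
    have key: "CA D a b" if a: "(c, x) \<in> D\<^sup>*" "(y, a) \<in> D\<^sup>*" "(c, b) \<in> D\<^sup>*" "b \<in> V" for a b
    proof -
      have "CA D x b" unfolding CA_def using a by auto
      then have "cu U x b" using uec_CA[OF D xy(1) a(4)] by simp
      then have "cu U y b" using le a(4) unfolding lee_def by auto
      then have "CA D y b" using uec_CA[OF D xy(2) a(4)] by simp
      then obtain c' where "(c', y) \<in> D\<^sup>*" "(c', b) \<in> D\<^sup>*" unfolding CA_def by auto
      then show ?thesis unfolding CA_def using a(2) by (meson rtrancl_trans)
    qed
    from c(1) have c1: "(c, v) \<in> D\<^sup>* \<or> ((c, x) \<in> D\<^sup>* \<and> (y, v) \<in> D\<^sup>*)"
      unfolding rtrancl_insert by auto
    from c(2) have c2: "(c, w) \<in> D\<^sup>* \<or> ((c, x) \<in> D\<^sup>* \<and> (y, w) \<in> D\<^sup>*)"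
      unfolding rtrancl_insert by auto
    show "CA D v w"
    proof (cases "(c, v) \<in> D\<^sup>*")
      case True
      show ?thesis
      proof (cases "(c, w) \<in> D\<^sup>*")
        case True
        then show ?thesis using \<open>(c, v) \<in> D\<^sup>*\<close> unfolding CA_def by auto
      next
        case False
        then have "(c, x) \<in> D\<^sup>*" "(y, w) \<in> D\<^sup>*" using c2 by auto
        then have "CA D w v" using key[of w v] True vw by auto
        then show ?thesis unfolding CA_def by auto
      qed
    next
      case False
      then have cv: "(c, x) \<in> D\<^sup>*" "(y, v) \<in> D\<^sup>*" using c1 by auto
      show ?thesis
      proof (cases "(c, w) \<in> D\<^sup>*")
        case True
        then show ?thesis using key[of v w] cv vw by auto
      next
        case False
        then have "(y, w) \<in> D\<^sup>*" using c2 by auto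
        then show ?thesis using cv unfolding CA_def by auto
      qed
    qed
  qed
  have "udg V ?D = udg V D"
    unfolding udg_eq[OF ac] udg_eq[OF conjunct2[OF d(1)[unfolded dag_def]]] using eq by auto
  then show ?thesis using dag' d(2) unfolding uec_def by auto
qed

lemma max_iff:
  "maximal_in_uec V U D \<longleftrightarrow> D \<in> uec V U \<and> QQ V U D"
proof
  assume m: "maximal_in_uec V U D"
  then have D: "D \<in> uec V U" unfolding maximal_in_uec_def by auto
  have "QQ V U D" unfolding QQ_def
  proof (intro ballI impI)
    fix x y assume xy: "x \<in> V" "y \<in> V" "x \<noteq> y" "lee V U x y"
    show "(x, y) \<in> D \<or> (y, x) \<in> D\<^sup>*"
    proof (rule ccontr)
      assume n: "\<not> ((x, y) \<in> D \<or> (y, x) \<in> D\<^sup>*)"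
      have ac0: "acyclic D" using D unfolding uec_def dag_def by auto
      have ac: "acyclic (insert (x, y) D)" using ac0 n by simp
      have "insert (x, y) D \<in> uec V U" using P2[OF D xy(1,2) ac xy(4)] .
      moreover have "dag V (insert (x, y) D)" using calculation unfolding uec_def by auto
      ultimately show False using m n unfolding maximal_in_uec_def by blast
    qed
  qed
  then show "D \<in> uec V U \<and> QQ V U D" using D by auto
next
  assume a: "D \<in> uec V U \<and> QQ V U D"
  show "maximal_in_uec V U D" unfolding maximal_in_uec_def
  proof (intro conjI allI impI)
    show "D \<in> uec V U" using a by auto
    fix x y assume xy: "(x, y) \<notin> D \<and> dag V (insert (x, y) D)"
    show "insert (x, y) D \<notin> uec V U"
    proof
      assume D': "insert (x, y) D \<in> uec V U"
      have ac: "acyclic (insert (x, y) D)" and sub: "insert (x, y) D \<subseteq> V \<times> V"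
        using xy unfolding dag_def by auto
      then have xyV: "x \<in> V" "y \<in> V" by auto
      have "x \<noteq> y" using ac unfolding acyclic_def by auto
      have "lee V U x y" using P1[OF D' _ xyV] by auto
      then have "(x, y) \<in> D \<or> (y, x) \<in> D\<^sup>*" using a xyV \<open>x \<noteq> y\<close> unfolding QQ_def by auto
      then show False using xy ac by auto
    qed
  qed
qed



lemma acyc_anti: "acyclic D \<Longrightarrow> (x, y) \<in> D\<^sup>* \<Longrightarrow> (y, x) \<in> D\<^sup>* \<Longrightarrow> x = y"
proof (rule ccontr)
  assume a: "acyclic D" "(x, y) \<in> D\<^sup>*" "(y, x) \<in> D\<^sup>*" "x \<noteq> y"
  then have "(x, y) \<in> D\<^sup>+" by (simp add: rtrancl_eq_or_trancl)
  then have "(x, x) \<in> D\<^sup>+" using a(3) by (rule trancl_rtrancl_trancl)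
  then show False using a(1) unfolding acyclic_def by auto
qed

lemma uec_dag: "D \<in> uec V U \<Longrightarrow> D \<subseteq> V \<times> V \<and> acyclic D"
  unfolding uec_def dag_def by auto

lemma edge_le: "D \<in> uec V U \<Longrightarrow> (x, y) \<in> D \<Longrightarrow> lee V U x y"
  using P1[of D V U x y] uec_dag[of D V U] by auto

lemma edge_neq: "acyclic D \<Longrightarrow> (x, y) \<in> D \<Longrightarrow> x \<noteq> y"
  unfolding acyclic_def by auto

lemma adj_char:
  assumes D: "D \<in> uec V U" "QQ V U D"
  shows "adj D x y \<longleftrightarrow> x \<in> V \<and> y \<in> V \<and> x \<noteq> y \<and> (lee V U x y \<or> lee V U y x)"
proof
  have sa: "D \<subseteq> V \<times> V" "acyclic D" using uec_dag[OF D(1)] by auto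
  assume "adj D x y"
  then show "x \<in> V \<and> y \<in> V \<and> x \<noteq> y \<and> (lee V U x y \<or> lee V U y x)"
    unfolding adj_def using sa edge_le[OF D(1)] edge_neq[OF sa(2)] by blast
next
  have sa: "D \<subseteq> V \<times> V" "acyclic D" using uec_dag[OF D(1)] by auto
  have one: "adj D a b" if ab: "a \<in> V" "b \<in> V" "a \<noteq> b" "lee V U a b" for a b
  proof -
    have "(a, b) \<in> D \<or> (b, a) \<in> D\<^sup>*" using D(2) ab unfolding QQ_def by auto
    then show ?thesis
    proof
      assume "(a, b) \<in> D" then show ?thesis unfolding adj_def by auto
    next
      assume ba: "(b, a) \<in> D\<^sup>*"
      have "lee V U b a" by (rule P1[OF D(1) ba ab(2,1)])
      then have "(b, a) \<in> D \<or> (a, b) \<in> D\<^sup>*" using D(2) ab unfolding QQ_def by auto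
      then show ?thesis
      proof
        assume "(b, a) \<in> D" then show ?thesis unfolding adj_def by auto
      next
        assume "(a, b) \<in> D\<^sup>*"
        then have "a = b" using acyc_anti[OF sa(2) _ ba] by auto
        then show ?thesis using ab by auto
      qed
    qed
  qed
  assume "x \<in> V \<and> y \<in> V \<and> x \<noteq> y \<and> (lee V U x y \<or> lee V U y x)"
  then show "adj D x y" using one[of x y] one[of y x] unfolding adj_def by auto
qed

lemma edge_strict:
  assumes D: "D \<in> uec V U" "QQ V U D" and le: "lee V U x y" "\<not> lee V U y x"
  shows "(x, y) \<in> D"
proof -
  have V: "x \<in> V" "y \<in> V" using le(1) unfolding lee_def by auto
  have "x \<noteq> y" using le lee_refl[OF V(1)] by auto
  then have "(x, y) \<in> D \<or> (y, x) \<in> D\<^sup>*" using D(2) le V unfolding QQ_def by auto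
  then show ?thesis using P1[OF D(1) _ V(2,1)] le(2) by auto
qed

lemma vs_char:
  assumes D: "D \<in> uec V U" "QQ V U D"
  shows "(a, b, c) \<in> v_structures D \<longleftrightarrow>
    lee V U a b \<and> \<not> lee V U b a \<and> lee V U c b \<and> \<not> lee V U b c \<and>
    \<not> lee V U a c \<and> \<not> lee V U c a \<and> a \<noteq> c"
proof
  assume "(a, b, c) \<in> v_structures D"
  then have v: "(a, b) \<in> D" "(c, b) \<in> D" "a \<noteq> c" "\<not> adj D a c"
    unfolding v_structures_def by auto
  have l: "lee V U a b" "lee V U c b" using edge_le[OF D(1)] v by auto
  then have V: "a \<in> V" "c \<in> V" unfolding lee_def by auto
  have n: "\<not> lee V U a c" "\<not> lee V U c a" using v(3,4) adj_char[OF D, of a c] V by auto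
  show "lee V U a b \<and> \<not> lee V U b a \<and> lee V U c b \<and> \<not> lee V U b c \<and>
    \<not> lee V U a c \<and> \<not> lee V U c a \<and> a \<noteq> c"
    using l n v(3) lee_trans[of V U c b a] lee_trans[of V U a b c] by auto
next
  assume a: "lee V U a b \<and> \<not> lee V U b a \<and> lee V U c b \<and> \<not> lee V U b c \<and>
    \<not> lee V U a c \<and> \<not> lee V U c a \<and> a \<noteq> c"
  have "(a, b) \<in> D" "(c, b) \<in> D" using edge_strict[OF D] a by auto
  moreover have "\<not> adj D a c" using adj_char[OF D, of a c] a by auto
  ultimately show "(a, b, c) \<in> v_structures D" unfolding v_structures_def using a by auto
qed

lemma max_me:
  assumes "D \<in> uec V U" "QQ V U D" "M \<in> uec V U" "QQ V U M"
  shows "markov_equivalent D M"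
proof -
  have "skeleton D = skeleton M"
    unfolding skeleton_def using adj_char[OF assms(1,2)] adj_char[OF assms(3,4)] by auto
  moreover have "v_structures D = v_structures M"
  proof (rule set_eqI)
    fix t :: "'a \<times> 'a \<times> 'a"
    obtain a b c where t: "t = (a, b, c)" by (cases t) auto
    show "t \<in> v_structures D \<longleftrightarrow> t \<in> v_structures M"
      unfolding t vs_char[OF assms(1,2)] vs_char[OF assms(3,4)] ..
  qed
  ultimately show ?thesis unfolding markov_equivalent_def by auto
qed



lemma no_parent_rt: "(d, s) \<in> M\<^sup>* \<Longrightarrow> (\<forall>y. (y, s) \<notin> M) \<Longrightarrow> d = s"
  by (erule rtranclE) auto

lemma me_dir:
  assumes fin: "finite V" and M: "M \<in> uec V U" "QQ V U M"
    and D: "dag V D" "markov_equivalent D M"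
  shows "D \<in> uec V U \<and> QQ V U D"
proof -
  have sD: "D \<subseteq> V \<times> V" "acyclic D" using D(1) unfolding dag_def by auto
  have sM: "M \<subseteq> V \<times> V" "acyclic M" using uec_dag[OF M(1)] by auto
  have adjDM: "adj D x y = adj M x y" for x y
  proof -
    have "skeleton D = skeleton M" using D(2) unfolding markov_equivalent_def by auto
    then have "((x, y) \<in> skeleton D) = ((x, y) \<in> skeleton M)" by simp
    then show ?thesis unfolding skeleton_def by simp
  qed
  have vsDM: "((a, b, c) \<in> v_structures D) = ((a, b, c) \<in> v_structures M)" for a b c
    using D(2) unfolding markov_equivalent_def by simp
  have QD: "QQ V U D" unfolding QQ_def
  proof (intro ballI impI)
    fix x y assume xy: "x \<in> V" "y \<in> V" "x \<noteq> y" "lee V U x y"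
    then have "adj M x y" using adj_char[OF M] by auto
    then have "adj D x y" using adjDM by simp
    then show "(x, y) \<in> D \<or> (y, x) \<in> D\<^sup>*" unfolding adj_def by auto
  qed
  have edge_leD: "lee V U x y" if e: "(x, y) \<in> D" for x y
  proof -
    have "adj D x y" using e unfolding adj_def by auto
    then have "adj M x y" using adjDM by simp
    then have xy: "x \<in> V" "y \<in> V" "x \<noteq> y" "lee V U x y \<or> lee V U y x"
      using adj_char[OF M] by auto
    show ?thesis
    proof (rule ccontr)
      assume nxy: "\<not> lee V U x y"
      then have yx: "lee V U y x" using xy by auto
      from nxy xy obtain b where b: "b \<in> V" "cu U x b" "\<not> cu U y b" unfolding lee_def by auto
      have "CA M x b" using uec_CA[OF M(1) xy(1) b(1)] b(2) by simp
      then obtain c where c: "(c, x) \<in> M\<^sup>*" "(c, b) \<in> M\<^sup>*" unfolding CA_def by auto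
      have cV: "c \<in> V" using rt_V[OF sM(1) c(1) xy(1)] .
      have cx: "lee V U c x" using P1[OF M(1) c(1) cV xy(1)] .
      have cb: "lee V U c b" using P1[OF M(1) c(2) cV b(1)] .
      have "cu U c b" using uec_CA[OF M(1) cV b(1)] c(2) unfolding CA_def by auto
      then have ncy: "\<not> lee V U c y" using b unfolding lee_def by auto
      have nyc: "\<not> lee V U y c"
      proof
        assume "lee V U y c"
        then have "lee V U y b" using cb lee_trans by metis
        then have "cu U b y" using xy(2) unfolding lee_def cu_def by auto
        then have "cu U y b" using cu_sym[OF M(1) b(1) xy(2)] by auto
        then show False using b(3) by simp
      qed
      have nxc: "\<not> lee V U x c"
      proof
        assume "lee V U x c" then show False using yx nyc lee_trans by metis
      qed
      have "y \<noteq> c" using nyc lee_refl[OF xy(2)] by auto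
      then have "(y, x, c) \<in> v_structures M" using vs_char[OF M] yx nxy cx nxc nyc ncy by auto
      then have "(y, x, c) \<in> v_structures D" using vsDM by simp
      then have "(y, x) \<in> D" unfolding v_structures_def by auto
      then have "x = y" using acyc_anti[OF sD(2)] e by auto
      then show False using xy(3) by simp
    qed
  qed
  have rt_leD: "y \<in> V \<longrightarrow> lee V U x y" if r: "(x, y) \<in> D\<^sup>*" for x y
    using r
  proof (induction rule: rtrancl_induct)
    case base then show ?case using lee_refl by metis
  next
    case (step z y)
    have "z \<in> V" using step(2) sD(1) by auto
    then show ?case using step edge_leD lee_trans by metis
  qed
  have finD: "finite D" using sD(1) fin finite_subset by (metis finite_SigmaI)
  have finM: "finite M" using sM(1) fin finite_subset by (metis finite_SigmaI)
  have wfD: "wf D" using finite_acyclic_wf[OF finD sD(2)] .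
  have wfM: "wf M" using finite_acyclic_wf[OF finM sM(2)] .
  have CA_D: "CA D v w = (\<exists>t. lee V U t v \<and> lee V U t w)" if vw: "v \<in> V" "w \<in> V" for v w
  proof
    assume "CA D v w"
    then obtain c where c: "(c, v) \<in> D\<^sup>*" "(c, w) \<in> D\<^sup>*" unfolding CA_def by auto
    then show "\<exists>t. lee V U t v \<and> lee V U t w" using rt_leD vw by blast
  next
    assume "\<exists>t. lee V U t v \<and> lee V U t w"
    then obtain t where t: "t \<in> {t. lee V U t v \<and> lee V U t w}" by auto
    obtain t0 where t0: "t0 \<in> {t. lee V U t v \<and> lee V U t w}"
      and mn: "\<And>y. (y, t0) \<in> D \<Longrightarrow> y \<notin> {t. lee V U t v \<and> lee V U t w}"
      using wfE_min[OF wfD t] by blast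
    have reach: "(t0, z) \<in> D\<^sup>*" if z: "lee V U t0 z" "lee V U t0 v" "lee V U t0 w" for z
    proof (cases "t0 = z")
      case True then show ?thesis by simp
    next
      case False
      have V2: "t0 \<in> V" "z \<in> V" using z(1) unfolding lee_def by auto
      then have "(t0, z) \<in> D \<or> (z, t0) \<in> D\<^sup>*" using QD False z(1) unfolding QQ_def by auto
      then show ?thesis
      proof
        assume "(t0, z) \<in> D" then show ?thesis by auto
      next
        assume zt: "(z, t0) \<in> D\<^sup>*"
        then have "(z, t0) \<in> D\<^sup>+" using False by (simp add: rtrancl_eq_or_trancl)
        then obtain u where u: "(z, u) \<in> D\<^sup>*" "(u, t0) \<in> D" by (blast dest: tranclD2)
        have ut: "lee V U u t0" using edge_leD[OF u(2)] .
        have "lee V U u v" "lee V U u w" using ut z(2,3) lee_trans by metis+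
        then show ?thesis using mn[OF u(2)] by auto
      qed
    qed
    have "(t0, v) \<in> D\<^sup>*" "(t0, w) \<in> D\<^sup>*" using reach t0 by auto
    then show "CA D v w" unfolding CA_def by auto
  qed
  have cu_M: "cu U v w = (\<exists>t. lee V U t v \<and> lee V U t w)" if vw: "v \<in> V" "w \<in> V" for v w
  proof
    assume "cu U v w"
    then have "CA M v w" using uec_CA[OF M(1) vw] by simp
    then obtain c where c: "(c, v) \<in> M\<^sup>*" "(c, w) \<in> M\<^sup>*" unfolding CA_def by auto
    have cV: "c \<in> V" using rt_V[OF sM(1) c(1) vw(1)] .
    show "\<exists>t. lee V U t v \<and> lee V U t w"
      using P1[OF M(1) c(1) cV vw(1)] P1[OF M(1) c(2) cV vw(2)] by blast
  next
    assume "\<exists>t. lee V U t v \<and> lee V U t w"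
    then obtain t where t: "lee V U t v" "lee V U t w" by auto
    have tV: "t \<in> V" using t unfolding lee_def by auto
    have tin: "t \<in> {s. (s, t) \<in> M\<^sup>*}" by simp
    obtain s where s: "s \<in> {s. (s, t) \<in> M\<^sup>*}"
      and mn: "\<And>y. (y, s) \<in> M \<Longrightarrow> y \<notin> {s. (s, t) \<in> M\<^sup>*}"
      using wfE_min[OF wfM tin] by blast
    have st: "(s, t) \<in> M\<^sup>*" using s by simp
    have np: "\<forall>y. (y, s) \<notin> M"
    proof (intro allI notI)
      fix y assume "(y, s) \<in> M"
      moreover then have "(y, t) \<in> M\<^sup>*" using st by (meson converse_rtrancl_into_rtrancl)
      ultimately show False using mn by auto
    qed
    have sV: "s \<in> V" using rt_V[OF sM(1) st tV] .
    have "CA M t s" unfolding CA_def using st by auto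
    then have cts: "cu U t s" using uec_CA[OF M(1) tV sV] by simp
    have reachs: "(s, z) \<in> M\<^sup>*" if z: "lee V U t z" for z
    proof -
      have zV: "z \<in> V" using z unfolding lee_def by auto
      have "cu U z s" using z cts sV unfolding lee_def by auto
      then have "CA M z s" using uec_CA[OF M(1) zV sV] by simp
      then obtain d where d: "(d, z) \<in> M\<^sup>*" "(d, s) \<in> M\<^sup>*" unfolding CA_def by auto
      have "d = s" using no_parent_rt[OF d(2) np] .
      then show ?thesis using d by simp
    qed
    have "CA M v w" unfolding CA_def using reachs t by blast
    then show "cu U v w" using uec_CA[OF M(1) vw] by simp
  qed
  have UM: "U = udg V M" using M(1) unfolding uec_def by auto
  have "udg V D = U"
  proof -
    have "udg V D = {(v, w). v \<in> V \<and> w \<in> V \<and> v \<noteq> w \<and> CA D v w}" using udg_eq[OF sD(2)] .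
    also have "\<dots> = {(v, w). v \<in> V \<and> w \<in> V \<and> v \<noteq> w \<and> CA M v w}"
    proof -
      have "v \<in> V \<Longrightarrow> w \<in> V \<Longrightarrow> CA D v w = CA M v w" for v w
        using CA_D[of v w] cu_M[of v w] uec_CA[OF M(1), of v w] by simp
      then show ?thesis by auto
    qed
    also have "\<dots> = U" using udg_eq[OF sM(2)] UM by simp
    finally show ?thesis .
  qed
  then show ?thesis using D(1) QD unfolding uec_def by auto
qed

theorem corollary5p2:
  fixes V :: "'a set" and U :: "('a \<times> 'a) set"
  assumes "finite V"
    and "uec_representative V U"
  shows "\<exists>D0. dag V D0 \<and>
           {D. maximal_in_uec V U D} = {D. dag V D \<and> markov_equivalent D D0}"
proof -
  obtain E where E: "dag V E" "udg V E = U" using assms(2) unfolding uec_representative_def by auto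
  have ne: "uec V U \<noteq> {}" using E unfolding uec_def by auto
  have finu: "finite (uec V U)"
  proof (rule finite_subset)
    show "uec V U \<subseteq> Pow (V \<times> V)" unfolding uec_def dag_def by auto
    show "finite (Pow (V \<times> V))" using assms(1) by simp
  qed
  obtain M where M: "M \<in> uec V U" and mx: "\<forall>b\<in>uec V U. M \<subseteq> b \<longrightarrow> M = b"
    using finite_has_maximal[OF finu ne] by auto
  have Mmax: "maximal_in_uec V U M" unfolding maximal_in_uec_def
  proof (intro conjI allI impI)
    show "M \<in> uec V U" by (rule M)
    fix x y assume xy: "(x, y) \<notin> M \<and> dag V (insert (x, y) M)"
    show "insert (x, y) M \<notin> uec V U"
    proof
      assume "insert (x, y) M \<in> uec V U"
      then have "M = insert (x, y) M" using mx by auto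
      then show False using xy by auto
    qed
  qed
  then have MQ: "QQ V U M" using max_iff by auto
  have "{D. maximal_in_uec V U D} = {D. dag V D \<and> markov_equivalent D M}"
  proof (rule set_eqI, rule iffI)
    fix D assume "D \<in> {D. maximal_in_uec V U D}"
    then have D: "D \<in> uec V U" "QQ V U D" using max_iff by auto
    then show "D \<in> {D. dag V D \<and> markov_equivalent D M}"
      using max_me[OF D M MQ] unfolding uec_def by auto
  next
    fix D assume "D \<in> {D. dag V D \<and> markov_equivalent D M}"
    then have "dag V D" "markov_equivalent D M" by auto
    then show "D \<in> {D. maximal_in_uec V U D}"
      using me_dir[OF assms(1) M MQ] max_iff by auto
  qed
  moreover have "dag V M" using M unfolding uec_def by auto
  ultimately show ?thesis by blast
qed

end
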